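(* Let $N\ge 2m\ge 0$ be integers. Then, as a polynomial in $j$, $\Delta(N,m)$ can be written as \[\Delta(N,m)=u\,(s_0+s_1v+\cdots+s_kv^k),\qquad s_0,\dots,s_k\in\mathbb{Q},\] with $k\le\big[\frac{2N-3m-1}{2}\big]$, where $u=2j-1$, $v=j(j-1)$. Moreover, if $(N,m)\ne(2,1)$, then $s_0=0$.
   Context: For positive integers $j$ let $\sigma_0(j)=1$, $\sigma_i(j)=\sum_{1\le n_1<\cdots<n_i\le j-1}n_1\cdots n_i$ for $1\le i\le j-1$ and $\sigma_i(j)=0$ for $i\ge j$; let $Q_0(j)=1$ and $Q_k(j)=-\sum_{i=1}^k\sigma_i(j)Q_{k-i}(j)$ for $k\ge1$. For each fixed index these agree on positive integers with polynomials in $j$, and are identified with them. $\binom{\alpha}{m}=\alpha(\alpha-1)\cdots(\alpha-m+1)/m!$ is the generalized binomial coefficient. For $N\ge 2m$ define \[\Delta(N,m)=\binom{j}{m}Q_{N-2m}(j)-(-1)^N\binom{1-j}{m}\sigma_{N-2m}(j),\] a polynomial in $j$ with rational coefficients. $[x]$ denotes the integer part. *)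

theory Defs
  imports Complex_Main
begin

definition sigma :: "nat \<Rightarrow> nat \<Rightarrow> rat" where
  "sigma i j = (\<Sum>S\<in>{S. S \<subseteq> {1..<j} \<and> card S = i}. \<Prod>n\<in>S. of_nat n)"

fun Q :: "nat \<Rightarrow> nat \<Rightarrow> rat" where
  "Q 0 j = 1"
| "Q (Suc k) j = - (\<Sum>i\<in>{1..Suc k}. sigma i j * Q (Suc k - i) j)"

definition Delta :: "nat \<Rightarrow> nat \<Rightarrow> nat \<Rightarrow> rat" where
  "Delta N m j = ((of_nat j) gchoose m) * Q (N - 2*m) j
     - (-1)^N * ((1 - of_nat j) gchoose m) * sigma (N - 2*m) j"

end

theory Submission imports Defs "HOL-Computational_Algebra.Computational_Algebra"
begin

lemma sigma0: "sigma 0 j = 1"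
proof -
  have "{S. S \<subseteq> {1..<j} \<and> card S = 0} = {{}}"
    using finite_subset[of _ "{1..<j}"] by auto
  then show ?thesis by (simp add: sigma_def)
qed

lemma sigma_1: "i \<ge> 1 \<Longrightarrow> sigma i 1 = 0"
proof -
  assume "i \<ge> 1"
  then have "{S. S \<subseteq> {1..<(1::nat)} \<and> card S = i} = {}" by auto
  then show ?thesis by (simp add: sigma_def)
qed

lemma sigma_rec: "sigma (Suc i) (Suc j) = sigma (Suc i) j + of_nat j * sigma i j"
proof (cases "j = 0")
  case True then show ?thesis by (simp add: sigma_def)
next
  case False
  let ?A = "{S. S \<subseteq> {1..<j} \<and> card S = Suc i}"
  let ?T = "{S. S \<subseteq> {1..<j} \<and> card S = i}"
  let ?B = "insert j ` ?T"
  have eq: "{S. S \<subseteq> {1..<Suc j} \<and> card S = Suc i} = ?A \<union> ?B"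
  proof (rule set_eqI, rule iffI)
    fix S assume S: "S \<in> {S. S \<subseteq> {1..<Suc j} \<and> card S = Suc i}"
    then have fin: "finite S" using finite_subset[of S "{1..<Suc j}"] by auto
    show "S \<in> ?A \<union> ?B"
    proof (cases "j \<in> S")
      case True
      have "S = insert j (S - {j})" using True by auto
      moreover have "S - {j} \<in> ?T" using S True fin by auto
      ultimately show ?thesis by blast
    next
      case False
      have "S \<subseteq> {1..<j}"
      proof
        fix x assume "x \<in> S"
        then have "x \<in> {1..<Suc j}" "x \<noteq> j" using S False by auto
        then show "x \<in> {1..<j}" by auto
      qed
      then have "S \<in> ?A" using S by auto
      then show ?thesis by blast
    qed
  next
    fix S assume "S \<in> ?A \<union> ?B"
    then show "S \<in> {S. S \<subseteq> {1..<Suc j} \<and> card S = Suc i}"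
    proof
      assume "S \<in> ?A" then show ?thesis by auto
    next
      assume "S \<in> ?B"
      then obtain T where T: "T \<in> ?T" "S = insert j T" by blast
      have "finite T" using T finite_subset[of T "{1..<j}"] by auto
      moreover have "j \<notin> T" using T by auto
      ultimately show ?thesis using T False by auto
    qed
  qed
  have disj: "?A \<inter> ?B = {}" by auto
  have finA: "finite ?A" by (rule finite_subset[of _ "Pow {1..<j}"]) auto
  have finT: "finite ?T" by (rule finite_subset[of _ "Pow {1..<j}"]) auto
  have inj: "inj_on (insert j) ?T"
    by (rule inj_onI) (metis (no_types, lifting) atLeastLessThan_iff insert_ident less_irrefl mem_Collect_eq subsetD)
  have "(\<Sum>S\<in>?B. \<Prod>n\<in>S. (of_nat n::rat)) = (\<Sum>T\<in>?T. \<Prod>n\<in>insert j T. of_nat n)"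
    by (rule sum.reindex[OF inj, unfolded comp_def])
  also have "\<dots> = (\<Sum>T\<in>?T. of_nat j * (\<Prod>n\<in>T. of_nat n))"
  proof (rule sum.cong[OF refl])
    fix T assume T: "T \<in> ?T"
    have "finite T" using T finite_subset[of T "{1..<j}"] by auto
    moreover have "j \<notin> T" using T by auto
    ultimately show "(\<Prod>n\<in>insert j T. (of_nat n::rat)) = of_nat j * (\<Prod>n\<in>T. of_nat n)" by simp
  qed
  also have "\<dots> = of_nat j * sigma i j" by (simp add: sigma_def sum_distrib_left)
  finally have hB: "(\<Sum>S\<in>?B. \<Prod>n\<in>S. (of_nat n::rat)) = of_nat j * sigma i j" .
  have "sigma (Suc i) (Suc j) = (\<Sum>S\<in>?A \<union> ?B. \<Prod>n\<in>S. of_nat n)" unfolding sigma_def eq ..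
  also have "\<dots> = (\<Sum>S\<in>?A. \<Prod>n\<in>S. of_nat n) + (\<Sum>S\<in>?B. \<Prod>n\<in>S. of_nat n)"
    by (rule sum.union_disjoint) (use finA finT disj in auto)
  finally show ?thesis using hB by (simp add: sigma_def)
qed

lemma Q_1: "Q (Suc k) 1 = 0"
proof -
  have "(\<Sum>i\<in>{1..Suc k}. sigma i 1 * Q (Suc k - i) 1) = 0"
  proof (rule sum.neutral, rule ballI)
    fix i assume "i \<in> {1..Suc k}"
    then show "sigma i 1 * Q (Suc k - i) 1 = 0" using sigma_1[of i] by simp
  qed
  then show ?thesis by (simp only: Q.simps)
qed

definition AF :: "nat \<Rightarrow> rat fps" where "AF j = Abs_fps (\<lambda>i. sigma i j)"
definition QF :: "nat \<Rightarrow> rat fps" where "QF j = Abs_fps (\<lambda>k. Q k j)"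

lemma AQ: "AF j * QF j = 1"
proof (rule fps_ext)
  fix n
  show "(AF j * QF j) $ n = 1 $ n"
  proof (cases n)
    case 0 then show ?thesis by (simp add: AF_def QF_def fps_mult_nth sigma0)
  next
    case (Suc k)
    have "{0..Suc k} = insert 0 {1..Suc k}" by auto
    then have "(AF j * QF j) $ n = sigma 0 j * Q (Suc k) j + (\<Sum>i\<in>{1..Suc k}. sigma i j * Q (Suc k - i) j)"
      by (simp add: AF_def QF_def fps_mult_nth Suc)
    also have "\<dots> = 0" by (simp add: sigma0)
    finally show ?thesis using Suc by simp
  qed
qed

lemma AF_rec: "AF (Suc j) = (1 + fps_const (of_nat j) * fps_X) * AF j"
proof (rule fps_ext)
  fix n
  show "AF (Suc j) $ n = ((1 + fps_const (of_nat j) * fps_X) * AF j) $ n"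
    by (cases n) (simp_all add: AF_def sigma0 sigma_rec algebra_simps mult.assoc)
qed

lemma QF_rec: "QF j = (1 + fps_const (of_nat j) * fps_X) * QF (Suc j)"
proof -
  have "QF j = QF j * (AF (Suc j) * QF (Suc j))" by (simp add: AQ)
  also have "\<dots> = (QF j * AF j) * ((1 + fps_const (of_nat j) * fps_X) * QF (Suc j))"
    by (simp add: AF_rec ac_simps)
  also have "\<dots> = (1 + fps_const (of_nat j) * fps_X) * QF (Suc j)"
    using AQ[of j] by (simp add: ac_simps)
  finally show ?thesis .
qed

lemma Q_rec: "Q (Suc k) j = Q (Suc k) (Suc j) + of_nat j * Q k (Suc j)"
proof -
  have "QF j $ Suc k = ((1 + fps_const (of_nat j) * fps_X) * QF (Suc j)) $ Suc k"
    using QF_rec by metis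
  then show ?thesis by (simp add: QF_def algebra_simps mult.assoc)
qed


lemma infroots:
  fixes e :: "rat poly"
  assumes "\<And>j. j \<ge> 1 \<Longrightarrow> poly e (of_nat j) = 0"
  shows "e = 0"
proof (rule ccontr)
  assume "e \<noteq> 0"
  then have fin: "finite {x. poly e x = 0}" by (rule poly_roots_finite)
  have "of_nat ` {1::nat..} \<subseteq> {x. poly e x = 0}" using assms by auto
  then have "finite (of_nat ` {1::nat..} :: rat set)" using fin finite_subset by blast
  then have "finite {1::nat..}" by (rule finite_imageD) (simp add: inj_on_def)
  then show False using infinite_Ici by blast
qed

lemma period_zero:
  fixes e :: "rat poly"
  assumes "\<And>x. poly e (x + 1) = poly e x" and "poly e 1 = 0"
  shows "e = 0"
proof (rule infroots)
  fix j :: nat assume "j \<ge> 1"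
  then show "poly e (of_nat j) = 0"
  proof (induction j rule: dec_induct)
    case base then show ?case using assms(2) by simp
  next
    case (step n) then show ?case using assms(1)[of "of_nat n"] by (simp add: add.commute)
  qed
qed

lemma antidiff_monom:
  "\<exists>g::rat poly. degree g \<le> Suc n \<and> (\<forall>x. poly g (x + 1) - poly g x = x ^ n)"
proof (induction n rule: less_induct)
  case (less n)
  then have "\<forall>i. \<exists>g::rat poly. i < n \<longrightarrow> degree g \<le> Suc i \<and> (\<forall>x. poly g (x + 1) - poly g x = x ^ i)"
    by blast
  then obtain G :: "nat \<Rightarrow> rat poly" where G: "\<And>i. i < n \<Longrightarrow> degree (G i) \<le> Suc i \<and> (\<forall>x. poly (G i) (x + 1) - poly (G i) x = x ^ i)"
    by metis
  define g where "g = smult (1 / of_nat (Suc n)) (monom 1 (Suc n) - (\<Sum>i<n. smult (of_nat (Suc n choose i)) (G i)))"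
  have "degree g \<le> Suc n"
    unfolding g_def
    apply (rule order.trans[OF degree_smult_le])
    apply (rule degree_diff_le)
     apply (simp add: degree_monom_le)
    apply (rule degree_sum_le, simp)
    apply (rule order.trans[OF degree_smult_le])
    using G by (meson Suc_leI le_SucI lessThan_iff order_trans)
  moreover have "\<forall>x. poly g (x + 1) - poly g x = x ^ n"
  proof
    fix x :: rat
    have bin: "(x + 1) ^ Suc n = (\<Sum>i<n. of_nat (Suc n choose i) * x ^ i) + of_nat (Suc n) * x ^ n + x ^ Suc n"
    proof -
      have "(x + 1) ^ Suc n = (\<Sum>i\<le>Suc n. of_nat (Suc n choose i) * x ^ i)"
        unfolding binomial_ring[of x 1 "Suc n"] by simp
      also have "\<dots> = (\<Sum>i<n. of_nat (Suc n choose i) * x ^ i) + of_nat (Suc n) * x ^ n + x ^ Suc n"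
        by (simp add: lessThan_Suc_atMost[symmetric] del: lessThan_Suc_atMost)
      finally show ?thesis .
    qed
    have "poly g (x + 1) - poly g x = (1 / of_nat (Suc n)) * (((x+1) ^ Suc n - x ^ Suc n) -
        (\<Sum>i<n. of_nat (Suc n choose i) * (poly (G i) (x+1) - poly (G i) x)))"
      by (simp add: g_def poly_sum poly_monom algebra_simps sum_subtractf)
    also have "(\<Sum>i<n. of_nat (Suc n choose i) * (poly (G i) (x+1) - poly (G i) x)) =
        (\<Sum>i<n. of_nat (Suc n choose i) * x ^ i)"
      using G by (intro sum.cong) auto
    also have "((x+1) ^ Suc n - x ^ Suc n) - (\<Sum>i<n. of_nat (Suc n choose i) * x ^ i) = of_nat (Suc n) * x ^ n"
      by (subst bin) (simp del: power_Suc)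
    finally show "poly g (x + 1) - poly g x = x ^ n"
      by (simp del: of_nat_Suc)
  qed
  ultimately show ?case by blast
qed

lemma antidiff:
  fixes f :: "rat poly"
  shows "\<exists>g. degree g \<le> Suc (degree f) \<and> (\<forall>x. poly g (x + 1) - poly g x = poly f x)"
proof -
  have "\<forall>i. \<exists>g::rat poly. degree g \<le> Suc i \<and> (\<forall>x. poly g (x + 1) - poly g x = x ^ i)"
    using antidiff_monom by blast
  then obtain G :: "nat \<Rightarrow> rat poly" where G: "\<And>i. degree (G i) \<le> Suc i \<and> (\<forall>x. poly (G i) (x + 1) - poly (G i) x = x ^ i)"
    by metis
  define g where "g = (\<Sum>i\<le>degree f. smult (coeff f i) (G i))"
  have "degree g \<le> Suc (degree f)"
    unfolding g_def
    apply (rule degree_sum_le, simp)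
    apply (rule order.trans[OF degree_smult_le])
    using G by (meson Suc_le_mono atMost_iff order_trans)
  moreover have "\<forall>x. poly g (x + 1) - poly g x = poly f x"
    using G by (simp add: g_def poly_sum poly_altdef[of f] sum_subtractf[symmetric] algebra_simps
        flip: right_diff_distrib)
  ultimately show ?thesis by blast
qed

fun pp :: "nat \<Rightarrow> rat poly" where
  "pp 0 = 1"
| "pp (Suc i) = (SOME g. degree g \<le> 2 * Suc i \<and> poly g 1 = 0 \<and> (\<forall>x. poly g (x + 1) - poly g x = x * poly (pp i) x))"

lemma pp_Suc_ex:
  assumes "degree (pp i) \<le> 2 * i"
  shows "\<exists>g. degree g \<le> 2 * Suc i \<and> poly g 1 = 0 \<and> (\<forall>x. poly g (x + 1) - poly g x = x * poly (pp i) x)"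
proof -
  obtain g where g: "degree g \<le> Suc (degree ([:0,1:] * pp i))"
      "\<forall>x. poly g (x + 1) - poly g x = poly ([:0,1:] * pp i) x"
    using antidiff by blast
  have "degree ([:0,1:] * pp i) \<le> Suc (2 * i)"
    using assms degree_mult_le[of "[:0,1:]" "pp i"] by simp
  then have dg: "degree g \<le> 2 * Suc i" using g(1) by simp
  define g' where "g' = g - [:poly g 1:]"
  have "degree g' \<le> 2 * Suc i" unfolding g'_def using dg by (intro degree_diff_le) auto
  moreover have "poly g' 1 = 0" by (simp add: g'_def)
  moreover have "\<forall>x. poly g' (x + 1) - poly g' x = x * poly (pp i) x"
    using g(2) by (simp add: g'_def)
  ultimately show ?thesis by blast
qed

lemma pp_all: "degree (pp i) \<le> 2 * i \<and>
  (i \<ge> 1 \<longrightarrow> poly (pp i) 1 = 0) \<and>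
  (i \<ge> 1 \<longrightarrow> (\<forall>x. poly (pp i) (x + 1) - poly (pp i) x = x * poly (pp (i - 1)) x))"
proof -
  have *: "degree (pp (Suc i)) \<le> 2 * Suc i \<and> poly (pp (Suc i)) 1 = 0 \<and>
      (\<forall>x. poly (pp (Suc i)) (x + 1) - poly (pp (Suc i)) x = x * poly (pp i) x)" if "degree (pp i) \<le> 2 * i" for i
    using someI_ex[OF pp_Suc_ex[OF that]] by simp
  have deg: "degree (pp i) \<le> 2 * i" for i
    by (induction i) (use * in auto)
  show ?thesis using deg[of i] *[OF deg] by (cases i) auto
qed

lemma pp_props: "degree (pp i) \<le> 2 * i"
  "i \<ge> 1 \<Longrightarrow> poly (pp i) 1 = 0"
  "i \<ge> 1 \<Longrightarrow> \<forall>x. poly (pp i) (x + 1) - poly (pp i) x = x * poly (pp (i - 1)) x"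
  using pp_all[of i] by auto

lemma pp_sigma: "j \<ge> 1 \<Longrightarrow> poly (pp i) (of_nat j) = sigma i j"
proof (induction i arbitrary: j)
  case 0 then show ?case by (simp add: sigma0)
next
  case (Suc i)
  from Suc.prems show ?case
  proof (induction j rule: dec_induct)
    case base then show ?case using pp_props(2)[of "Suc i"] sigma_1[of "Suc i"] by simp
  next
    case (step n)
    have "poly (pp (Suc i)) (of_nat n + 1) = poly (pp (Suc i)) (of_nat n) + of_nat n * poly (pp i) (of_nat n)"
      using pp_props(3)[of "Suc i"] by (auto simp: algebra_simps simp del: pp.simps)
    then show ?case using step Suc.IH[of n] sigma_rec[of i n] by (simp add: add.commute del: pp.simps)
  qed
qed

lemma qq_ex: "\<exists>q::rat poly. degree q \<le> 2 * k \<and> (\<forall>j\<ge>1. poly q (of_nat j) = Q k j)"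
proof (induction k rule: less_induct)
  case (less k)
  show ?case
  proof (cases k)
    case 0 then show ?thesis by (intro exI[of _ 1]) simp
  next
    case (Suc k')
    have "\<forall>t. \<exists>q::rat poly. t < k \<longrightarrow> degree q \<le> 2 * t \<and> (\<forall>j\<ge>1. poly q (of_nat j) = Q t j)"
      using less by blast
    then obtain F where F: "\<And>t. t < k \<Longrightarrow> degree (F t) \<le> 2 * t \<and> (\<forall>j\<ge>1. poly (F t) (of_nat j) = Q t j)"
      by metis
    define q where "q = - (\<Sum>i\<in>{1..k}. pp i * F (k - i))"
    have "degree q \<le> 2 * k"
      unfolding q_def degree_minus
    proof (rule degree_sum_le, simp)
      fix i assume i: "i \<in> {1..k}"
      have "degree (pp i * F (k - i)) \<le> degree (pp i) + degree (F (k - i))" by (rule degree_mult_le)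
      also have "\<dots> \<le> 2 * i + 2 * (k - i)" using pp_props(1)[of i] F[of "k - i"] i Suc by (intro add_mono) auto
      also have "\<dots> = 2 * k" using i by auto
      finally show "degree (pp i * F (k - i)) \<le> 2 * k" .
    qed
    moreover have "\<forall>j\<ge>1. poly q (of_nat j) = Q k j"
    proof (intro allI impI)
      fix j :: nat assume j: "j \<ge> 1"
      have "poly q (of_nat j) = - (\<Sum>i\<in>{1..k}. sigma i j * Q (k - i) j)"
        unfolding q_def poly_minus poly_sum poly_mult
        using F pp_sigma[OF j] j Suc by (intro arg_cong[where f=uminus] sum.cong) auto
      then show "poly q (of_nat j) = Q k j" using Suc by simp
    qed
    ultimately show ?thesis by blast
  qed
qed

definition qq :: "nat \<Rightarrow> rat poly" where
  "qq k = (SOME q. degree q \<le> 2 * k \<and> (\<forall>j\<ge>1. poly q (of_nat j) = Q k j))"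

lemma qq_props: "degree (qq k) \<le> 2 * k" "j \<ge> 1 \<Longrightarrow> poly (qq k) (of_nat j) = Q k j"
  using someI_ex[OF qq_ex[of k]] unfolding qq_def[symmetric] by auto

lemma qq_diff: "poly (qq (Suc k)) (x + 1) - poly (qq (Suc k)) x = - x * poly (qq k) (x + 1)"
proof -
  define e where "e = pcompose (qq (Suc k)) [:1,1:] - qq (Suc k) + [:0,1:] * pcompose (qq k) [:1,1:]"
  have "e = 0"
  proof (rule infroots)
    fix j :: nat assume j: "j \<ge> 1"
    have "poly e (of_nat j) = Q (Suc k) (Suc j) - Q (Suc k) j + of_nat j * Q k (Suc j)"
      using qq_props(2)[of j] qq_props(2)[of "Suc j"] j
      by (simp add: e_def poly_pcompose algebra_simps)
    then show "poly e (of_nat j) = 0" using Q_rec[of k j] by simp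
  qed
  then have "poly e x = 0" by simp
  then show ?thesis by (simp add: e_def poly_pcompose algebra_simps)
qed

lemma qq0: "qq 0 = 1"
proof -
  have "qq 0 - 1 = 0" by (rule infroots) (simp add: qq_props)
  then show ?thesis by simp
qed

lemma qq_at0: "poly (qq (Suc k)) 0 = 0"
proof -
  have "poly (qq (Suc k)) 1 = 0" using qq_props(2)[of 1 "Suc k"] Q_1[of k] by simp
  then show ?thesis using qq_diff[of k 0] by simp
qed

lemma reciprocity: "(-1) ^ k * poly (qq k) (1 - x) = poly (pp k) x"
proof (induction k arbitrary: x)
  case 0 then show ?case by (simp add: qq0)
next
  case (Suc k)
  define e where "e = smult ((-1) ^ Suc k) (pcompose (qq (Suc k)) [:1,-1:]) - pp (Suc k)"
  have "e = 0"
  proof (rule period_zero)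
    fix x :: rat
    have d1: "poly (qq (Suc k)) (1 - x) - poly (qq (Suc k)) (- x) = x * poly (qq k) (1 - x)"
      using qq_diff[of k "- x"] by (simp add: algebra_simps)
    have d2: "poly (pp (Suc k)) (x + 1) - poly (pp (Suc k)) x = x * poly (pp k) x"
      using pp_props(3)[of "Suc k"] by simp
    show "poly e (x + 1) = poly e x"
      using d1 d2 Suc.IH[of x] by (simp add: e_def poly_pcompose algebra_simps)
  next
    show "poly e 1 = 0" using qq_at0[of k] pp_props(2)[of "Suc k"] by (simp add: e_def poly_pcompose)
  qed
  then have "poly e x = 0" by simp
  then show ?case by (simp add: e_def poly_pcompose)
qed


lemma poly_mult_zero_cancel:
  fixes A H :: "rat poly"
  assumes "A \<noteq> 0" "\<And>x. poly A x * poly H x = 0"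
  shows "H = 0"
proof -
  have "A * H = 0" using assms(2) poly_all_0_iff_0[of "A * H"] by simp
  then show ?thesis using assms(1) by simp
qed

lemma sym_fact:
  fixes E :: "rat poly"
  assumes "\<And>x. poly E (1 - x) = poly E x"
  shows "\<exists>S. (\<forall>x. poly E x = poly S (x * (x - 1))) \<and> 2 * degree S \<le> degree E"
  using assms
proof (induction "degree E" arbitrary: E rule: less_induct)
  case less
  show ?case
  proof (cases "degree E = 0")
    case True
    then obtain c where "E = [:c:]" by (metis degree_eq_zeroE)
    then show ?thesis by (intro exI[of _ E]) simp
  next
    case False
    define c where "c = poly E 0"
    define E0 where "E0 = E - [:c:]"
    have "poly E0 0 = 0" by (simp add: E0_def c_def)
    then have "[:0,1:] dvd E0" using poly_eq_0_iff_dvd[of E0 0] by simp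
    then obtain F where F: "E0 = [:0,1:] * F" by (elim dvdE)
    have "poly E0 1 = 0" using less.prems[of 1] by (simp add: E0_def c_def)
    then have "poly F 1 = 0" using F by simp
    then have "[:-1,1:] dvd F" using poly_eq_0_iff_dvd[of F 1] by simp
    then obtain G where G: "F = [:-1,1:] * G" by (elim dvdE)
    have E0G: "E0 = [:0,-1,1:] * G" using F G by simp
    have pE: "poly E x = c + x * (x - 1) * poly G x" for x
    proof -
      have "poly E x = poly E0 x + c" by (simp add: E0_def)
      then show ?thesis by (simp add: E0G algebra_simps)
    qed
    have Gne: "G \<noteq> 0"
    proof
      assume "G = 0" then have "E = [:c:]" using E0G E0_def by simp
      then show False using False by simp
    qed
    have "E0 = E + [:-c:]" by (simp add: E0_def)
    then have dE0: "degree E0 = degree E" using False by (simp add: degree_add_eq_left)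
    have dv: "degree ([:0,-1,1:] :: rat poly) = 2" by simp
    have dG: "degree E = 2 + degree G" using dE0 E0G degree_mult_eq[of "[:0,-1,1:]" G] Gne dv by simp
    have Gsym: "poly G (1 - x) = poly G x" for x
    proof -
      define H where "H = pcompose G [:1,-1:] - G"
      have "H = 0"
      proof (rule poly_mult_zero_cancel[of "[:0,-1,1:]"])
        show "[:0,-1,1:] \<noteq> (0::rat poly)" by simp
        fix y :: rat
        have "poly E (1 - y) = poly E y" by (rule less.prems)
        then have "(1 - y) * (1 - y - 1) * poly G (1 - y) = y * (y - 1) * poly G y" using pE by simp
        then show "poly [:0,-1,1:] y * poly H y = 0"
          by (simp add: H_def poly_pcompose algebra_simps)
      qed
      then have "poly H x = 0" by simp
      then show ?thesis by (simp add: H_def poly_pcompose)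
    qed
    obtain S' where S': "\<forall>y. poly G y = poly S' (y * (y - 1))" "2 * degree S' \<le> degree G"
      using less.hyps[of G] dG Gsym by auto
    define S where "S = pCons c S'"
    have "\<forall>x. poly E x = poly S (x * (x - 1))" using pE S' by (simp add: S_def)
    moreover have "2 * degree S \<le> degree E"
      using degree_pCons_le[of c S'] S'(2) dG unfolding S_def by linarith
    ultimately show ?thesis by blast
  qed
qed

lemma anti_fact:
  fixes D :: "rat poly"
  assumes "\<And>x. poly D (1 - x) = - poly D x" "D \<noteq> 0"
  shows "\<exists>S. (\<forall>x. poly D x = (2 * x - 1) * poly S (x * (x - 1))) \<and> 1 + 2 * degree S \<le> degree D"
proof -
  have "poly D (1/2) = 0" using assms(1)[of "1/2"] by simp
  then have "[:-(1/2),1:] dvd D" using poly_eq_0_iff_dvd by blast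
  then obtain E where E: "D = [:-(1/2),1:] * E" by (elim dvdE)
  have Ene: "E \<noteq> 0" using E assms(2) by auto
  have dD: "degree D = 1 + degree E" using E Ene degree_mult_eq[of "[:-(1/2),1:]" E] by simp
  have Esym: "poly E (1 - x) = poly E x" for x
  proof -
    define H where "H = pcompose E [:1,-1:] - E"
    have "H = 0"
    proof (rule poly_mult_zero_cancel[of "[:-(1/2),1:]"])
      show "[:-(1/2),1:] \<noteq> (0::rat poly)" by simp
      fix y :: rat
      have "poly D (1 - y) = - poly D y" by (rule assms(1))
      then show "poly [:-(1/2),1:] y * poly H y = 0"
        by (simp add: E H_def poly_pcompose algebra_simps)
    qed
    then have "poly H x = 0" by simp
    then show ?thesis by (simp add: H_def poly_pcompose)
  qed
  obtain S where S: "\<forall>x. poly E x = poly S (x * (x - 1))" "2 * degree S \<le> degree E"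
    using sym_fact[OF Esym] by blast
  define S2 where "S2 = smult (1/2) S"
  have "\<forall>x. poly D x = (2 * x - 1) * poly S2 (x * (x - 1))"
    using S by (simp add: E S2_def algebra_simps)
  moreover have "1 + 2 * degree S2 \<le> degree D" using dD S(2) degree_smult_le[of "1/2" S]
    unfolding S2_def by linarith
  ultimately show ?thesis by blast
qed

definition BP :: "nat \<Rightarrow> rat poly" where
  "BP m = smult (1 / fact m) (\<Prod>i\<in>{0..<m}. [:- of_nat i, 1:])"

lemma poly_BP: "poly (BP m) a = a gchoose m"
  by (simp add: BP_def poly_prod gbinomial_prod_rev)

lemma degree_BP: "degree (BP m) \<le> m"
proof -
  have "degree (\<Prod>i\<in>{0..<m}. [:- of_nat i, 1:] :: rat poly) \<le> (\<Sum>i\<in>{0..<m}. degree ([:- of_nat i, 1:] :: rat poly))"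
    using degree_prod_sum_le[of "{0..<m}" "\<lambda>i. [:- of_nat i, 1:] :: rat poly"] by (simp add: comp_def)
  also have "\<dots> = m" by simp
  finally show ?thesis unfolding BP_def using degree_smult_le order_trans by blast
qed

lemma Delta_1:
  assumes "2 * m \<le> N" "(N, m) \<noteq> (2, 1)"
  shows "Delta N m 1 = 0"
proof (cases "N - 2 * m")
  case 0
  then have N: "N = 2 * m" using assms by simp
  have "Delta N m 1 = (1 gchoose m) - (0 gchoose m)"
    by (simp add: Delta_def 0 sigma0 N)
  also have "\<dots> = 0"
  proof (cases "m \<le> 1")
    case True
    then have "m = 0" using assms N by (cases m) auto
    then show ?thesis by simp
  next
    case False
    have "(1::nat) choose m = 0" using False by simp
    then have "(1::rat) gchoose m = 0" using binomial_gbinomial[of 1 m] by (metis of_nat_0 of_nat_1)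
    then show ?thesis using False by (simp add: gbinomial_0_left)
  qed
  finally show ?thesis .
next
  case (Suc n)
  show ?thesis using Q_1[of n] sigma_1[of "Suc n"] by (simp add: Delta_def Suc)
qed

theorem proposition2p5:
  fixes N m :: nat
  assumes "2 * m \<le> N"
  shows "\<exists>(k::int) (s::nat \<Rightarrow> rat).
           k \<le> (2 * int N - 3 * int m - 1) div 2 \<and>
           (\<forall>j::nat. j \<ge> 1 \<longrightarrow>
              Delta N m j = (2 * of_nat j - 1) *
                 (\<Sum>i<nat (k + 1). s i * (of_nat j * (of_nat j - 1)) ^ i)) \<and>
           ((N, m) \<noteq> (2, 1) \<longrightarrow> s 0 = 0)"
proof -
  define n where "n = N - 2 * m"
  define sg :: rat where "sg = (-1) ^ N"
  have sgn: "sg = (-1) ^ n"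
  proof -
    have "N = n + 2 * m" using assms n_def by simp
    then show ?thesis by (simp add: sg_def power_add power_mult)
  qed
  have sg2: "sg * sg = 1" by (simp add: sgn flip: power_add)
  define D where "D = BP m * qq n - smult sg (pcompose (BP m) [:1,-1:] * pp n)"
  have pD: "poly D x = (x gchoose m) * poly (qq n) x - sg * (((1 - x) gchoose m) * poly (pp n) x)" for x
    by (simp add: D_def poly_pcompose poly_BP)
  have DDelta: "poly D (of_nat j) = Delta N m j" if "j \<ge> 1" for j
    using that by (simp add: pD Delta_def qq_props pp_sigma sg_def n_def)
  have rec1: "poly (qq n) (1 - x) = sg * poly (pp n) x" for x
    using reciprocity[of n x] sg2 unfolding sgn[symmetric]
    by (metis mult.assoc mult_1)
  have rec2: "poly (pp n) (1 - x) = sg * poly (qq n) x" for x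
    using reciprocity[of n "1 - x"] unfolding sgn[symmetric] by simp
  have anti: "poly D (1 - x) = - poly D x" for x
  proof -
    have "poly D (1 - x) = ((1 - x) gchoose m) * (sg * poly (pp n) x) - sg * ((x gchoose m) * (sg * poly (qq n) x))"
      by (simp add: pD rec1 rec2)
    also have "\<dots> = - poly D x" using sg2 by (simp add: pD algebra_simps)
    finally show ?thesis .
  qed
  have degD: "degree D \<le> 2 * N - 3 * m"
  proof -
    have "degree (BP m * qq n) \<le> m + 2 * n"
      using degree_mult_le[of "BP m" "qq n"] degree_BP[of m] qq_props(1)[of n] by linarith
    moreover have "degree (smult sg (pcompose (BP m) [:1,-1:] * pp n)) \<le> m + 2 * n"
    proof -
      have "degree (pcompose (BP m) [:1,-1:]) \<le> m"
        using degree_pcompose_le[of "BP m" "[:1,-1:]"] degree_BP[of m] by simp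
      then show ?thesis
        using degree_smult_le[of sg "pcompose (BP m) [:1,-1:] * pp n"]
          degree_mult_le[of "pcompose (BP m) [:1,-1:]" "pp n"] pp_props(1)[of n] by linarith
    qed
    ultimately have "degree D \<le> m + 2 * n" unfolding D_def by (intro degree_diff_le)
    then show ?thesis using assms n_def by simp
  qed
  show ?thesis
  proof (cases "D = 0")
    case True
    then have "\<forall>j\<ge>1. Delta N m j = 0" using DDelta by (metis poly_0)
    moreover have "(-1::int) \<le> (2 * int N - 3 * int m - 1) div 2" using assms by simp
    ultimately show ?thesis by (intro exI[of _ "-1"] exI[of _ "\<lambda>_. 0"]) auto
  next
    case False
    obtain S where S: "\<forall>x. poly D x = (2 * x - 1) * poly S (x * (x - 1))" "1 + 2 * degree S \<le> degree D"
      using anti_fact[OF anti False] by blast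
    define k where "k = int (degree S)"
    have kb: "k \<le> (2 * int N - 3 * int m - 1) div 2"
    proof -
      have "1 + 2 * degree S \<le> 2 * N - 3 * m" using S(2) degD by simp
      then have "2 * k \<le> 2 * int N - 3 * int m - 1" using assms unfolding k_def by linarith
      then show ?thesis by presburger
    qed
    have sum: "(\<Sum>i<nat (k + 1). coeff S i * y ^ i) = poly S y" for y
    proof -
      have "nat (k + 1) = Suc (degree S)" by (simp add: k_def)
      then show ?thesis by (simp add: poly_altdef lessThan_Suc_atMost)
    qed
    have main: "\<forall>j::nat. j \<ge> 1 \<longrightarrow> Delta N m j = (2 * of_nat j - 1) *
                 (\<Sum>i<nat (k + 1). coeff S i * (of_nat j * (of_nat j - 1)) ^ i)"
      using DDelta S(1) by (simp add: sum)
    have "(N, m) \<noteq> (2, 1) \<longrightarrow> coeff S 0 = 0"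
    proof
      assume "(N, m) \<noteq> (2, 1)"
      then have "Delta N m 1 = 0" using Delta_1 assms by blast
      then have "poly S 0 = 0" using DDelta[of 1] S(1) by simp
      then show "coeff S 0 = 0" by (simp add: poly_0_coeff_0)
    qed
    then show ?thesis using kb main by blast
  qed
qed

end
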